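(* Let $d > 1$ be an integer and let $K = \operatorname{Frac}(\mathcal{O})$ be the field of fractions of a complete discrete valuation ring $\mathcal{O}$ whose residue field is finite. In the coefficient-choosing game of degree $d$ over $K$, whichever player makes the last move has a winning strategy.
   Context: The coefficient-choosing game of degree $d$ over a commutative ring $R$ with unity: Nora and Wanda alternately choose coefficients of $f(x) = a_d x^d + \cdots + a_0$; on each move the current player picks a not-yet-chosen coefficient and assigns it a value in $R$, subject to $a_d \neq 0$, $a_0 \neq 0$. After all $d+1$ coefficients are chosen, Wanda wins if $f$ has a root in $\operatorname{Frac}(R)$ (here $R = K$ is a field, so a root in $K$), and Nora wins otherwise. Who moves first is fixed in advance, which determines who makes the last move. *)

theory Defs
  imports "HOL-Computational_Algebra.Polynomial"
begin

text \<open>A normalized discrete valuation v on a field (values on nonzero elements only;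
  the value at 0 is irrelevant, conventionally +infinity). Its valuation ring
  O = {x. x = 0 \<or> v x \<ge> 0} is a DVR with maximal ideal {x. x = 0 \<or> v x \<ge> 1},
  and the field is Frac(O).\<close>

definition val_ring :: "('k::field \<Rightarrow> int) \<Rightarrow> 'k set" where
  "val_ring v = {x. x = 0 \<or> v x \<ge> 0}"

definition val_ideal :: "('k::field \<Rightarrow> int) \<Rightarrow> int \<Rightarrow> 'k set" where
  "val_ideal v n = {x. x = 0 \<or> v x \<ge> n}"

definition discrete_valuation :: "('k::field \<Rightarrow> int) \<Rightarrow> bool" where
  "discrete_valuation v \<longleftrightarrow>
     (\<forall>x y. x \<noteq> 0 \<longrightarrow> y \<noteq> 0 \<longrightarrow> v (x * y) = v x + v y) \<and>
     (\<forall>x y. x \<noteq> 0 \<longrightarrow> y \<noteq> 0 \<longrightarrow> x + y \<noteq> 0 \<longrightarrow> v (x + y) \<ge> min (v x) (v y)) \<and>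
     (\<exists>\<pi>. \<pi> \<noteq> 0 \<and> v \<pi> = 1)"

definition finite_residue_field :: "('k::field \<Rightarrow> int) \<Rightarrow> bool" where
  "finite_residue_field v \<longleftrightarrow>
     (\<exists>F. finite F \<and> F \<subseteq> val_ring v \<and> (\<forall>x \<in> val_ring v. \<exists>y\<in>F. x - y \<in> val_ideal v 1))"

definition val_complete :: "('k::field \<Rightarrow> int) \<Rightarrow> bool" where
  "val_complete v \<longleftrightarrow>
     (\<forall>s :: nat \<Rightarrow> 'k.
        (\<forall>n. \<exists>N. \<forall>p\<ge>N. \<forall>q\<ge>N. s p - s q \<in> val_ideal v n) \<longrightarrow>
        (\<exists>L. \<forall>n. \<exists>N. \<forall>p\<ge>N. s p - L \<in> val_ideal v n))"

definition local_field_valuation :: "('k::field \<Rightarrow> int) \<Rightarrow> bool" where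
  "local_field_valuation v \<longleftrightarrow>
     discrete_valuation v \<and> finite_residue_field v \<and> val_complete v"

datatype player = Nora | Wanda

fun other :: "player \<Rightarrow> player" where
  "other Nora = Wanda" | "other Wanda = Nora"

text \<open>A position records which coefficients a_0..a_d have been chosen (Some value)
  and which are still open (None).\<close>
type_synonym 'k position = "nat \<Rightarrow> 'k option"

definition complete_pos :: "nat \<Rightarrow> 'k position \<Rightarrow> bool" where
  "complete_pos d a \<longleftrightarrow> (\<forall>i\<le>d. a i \<noteq> None)"

definition legal_move :: "nat \<Rightarrow> 'k::zero position \<Rightarrow> nat \<Rightarrow> 'k \<Rightarrow> bool" where
  "legal_move d a i c \<longleftrightarrow> i \<le> d \<and> a i = None \<and> ((i = d \<or> i = 0) \<longrightarrow> c \<noteq> 0)"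

definition final_poly :: "nat \<Rightarrow> 'k::comm_monoid_add position \<Rightarrow> 'k poly" where
  "final_poly d a = (\<Sum>i\<le>d. monom (the (a i)) i)"

definition winner :: "nat \<Rightarrow> 'k::field position \<Rightarrow> player" where
  "winner d a = (if \<exists>x. poly (final_poly d a) x = 0 then Wanda else Nora)"

text \<open>wins d P a m: player P has a winning strategy from position a when m is to move.
  The game has finite length, so the least fixed point captures exactly the
  existence of a winning strategy.\<close>
inductive wins :: "nat \<Rightarrow> player \<Rightarrow> 'k::field position \<Rightarrow> player \<Rightarrow> bool"
  for d :: nat and P :: player where
  finished: "complete_pos d a \<Longrightarrow> winner d a = P \<Longrightarrow> wins d P a m"
| own_move: "\<not> complete_pos d a \<Longrightarrow> legal_move d a i c \<Longrightarrow>
      wins d P (a(i := Some c)) (other P) \<Longrightarrow> wins d P a P"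
| opp_move: "\<not> complete_pos d a \<Longrightarrow> m \<noteq> P \<Longrightarrow>
      (\<forall>i c. legal_move d a i c \<longrightarrow> wins d P (a(i := Some c)) P) \<Longrightarrow> wins d P a m"

text \<open>There are d+1 moves in total; the player moving first makes moves 1,3,5,...\<close>
definition last_mover :: "nat \<Rightarrow> player \<Rightarrow> player" where
  "last_mover d first = (if even d then first else other first)"

end

theory Submission
  imports Defs
begin


lemma ineq:
  fixes a c D vi w L V :: int
  assumes "0 < a" "0 < c" "a + c = D" "\<bar>vi\<bar> \<le> V" "\<bar>w\<bar> \<le> V" "L \<le> -2*D*V - 1"
  shows "a*L + c*w < D*vi"
proof -
  have V0: "V \<ge> 0" using assms by linarith
  have "(a - 1) * L \<le> 0"
  proof -
    have "D*V \<ge> 0" using assms V0 by simp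
    then have "L \<le> 0" using assms by linarith
    then show ?thesis using assms by (intro mult_nonneg_nonpos) auto
  qed
  then have 1: "a*L \<le> L" by (simp add: algebra_simps)
  have 2: "c*w \<le> c*V" using assms by (intro mult_left_mono) auto
  have 3: "c*V \<le> D*V" using assms V0 by (intro mult_right_mono) auto
  have 4: "D*vi \<ge> D*(-V)" using assms by (intro mult_left_mono) auto
  have 5: "2*D*V = 2*(D*V)" by simp
  have 6: "D*(-V) = -(D*V)" by simp
  show ?thesis using 1 2 3 4 5 6 assms by linarith
qed

lemma ineqC:
  fixes a c D x y L V :: int
  assumes "0 \<le> a" "0 \<le> c" "a + c = D" "D \<ge> 1" "\<bar>x\<bar> \<le> V" "\<bar>y\<bar> \<le> V" "L \<le> -2*D*V - 1"
  shows "D*L < a*x + c*y"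
proof -
  have V0: "V \<ge> 0" using assms by linarith
  have "D*V \<ge> 0" using assms V0 by simp
  then have L0: "L \<le> 0" using assms by linarith
  have "(D - 1) * L \<le> 0" using assms L0 by (intro mult_nonneg_nonpos) auto
  then have 1: "D*L \<le> L" by (simp add: algebra_simps)
  have 2: "a*x \<ge> a*(-V)" using assms by (intro mult_left_mono) auto
  have 3: "c*y \<ge> c*(-V)" using assms by (intro mult_left_mono) auto
  have 4: "a*(-V) + c*(-V) = -(D*V)" unfolding assms(3)[symmetric] by (simp add: algebra_simps)
  have 5: "D*V \<ge> 0" using assms V0 by simp
  have 6: "2*D*V = 2*(D*V)" by simp
  show ?thesis using 1 2 3 4 5 6 assms by linarith
qed

lemma shiftdvd:
  fixes j m K a :: int
  shows "j dvd (a + j*m*K) \<longleftrightarrow> j dvd a" "m dvd (a + j*m*K) \<longleftrightarrow> m dvd a"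
proof -
  have "j dvd j*m*K" by simp
  then show "j dvd (a + j*m*K) \<longleftrightarrow> j dvd a" using dvd_add_left_iff by blast
  have "m dvd j*m*K" by simp
  then show "m dvd (a + j*m*K) \<longleftrightarrow> m dvd a" using dvd_add_left_iff by blast
qed

lemma resid:
  fixes j m x y N :: int
  assumes "j \<ge> 2" "m \<ge> 2" "\<not> (j = 2 \<and> m = 2 \<and> \<not> 2 dvd (x - y))"
  shows "\<exists>L \<le> N. \<not> j dvd (x - L) \<and> \<not> m dvd (L - y)"
proof -
  have "\<exists>L0. \<not> j dvd (x - L0) \<and> \<not> m dvd (L0 - y)"
  proof (cases "m \<ge> 3")
    case True
    have a: "\<not> m dvd 1" "\<not> m dvd 2" using True by (auto dest: zdvd_imp_le)
    show ?thesis
    proof (cases "j dvd (x - (y+1))")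
      case False then show ?thesis using a by (intro exI[of _ "y+1"]) simp
    next
      case True
      have "\<not> j dvd (x - (y+2))"
      proof
        assume "j dvd (x - (y+2))"
        with True have "j dvd ((x - (y+1)) - (x - (y+2)))" by (rule dvd_diff)
        then show False using assms by (auto dest: zdvd_imp_le)
      qed
      then show ?thesis using a by (intro exI[of _ "y+2"]) simp
    qed
  next
    case False
    then have m2: "m = 2" using assms by linarith
    show ?thesis
    proof (cases "j = 2")
      case True
      then have "2 dvd (x - y)" using assms m2 by auto
      then have "\<not> 2 dvd (x - (y+1))" by presburger
      then show ?thesis using True m2 by (intro exI[of _ "y+1"]) simp
    next
      case False
      then have j3: "j \<ge> 3" using assms by linarith
      have a: "\<not> m dvd 1" "\<not> m dvd 3" using m2 by auto
      show ?thesis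
      proof (cases "j dvd (x - (y+1))")
        case False then show ?thesis using a by (intro exI[of _ "y+1"]) simp
      next
        case True
        have "\<not> j dvd (x - (y+3))"
        proof
          assume "j dvd (x - (y+3))"
          with True have "j dvd ((x - (y+1)) - (x - (y+3)))" by (rule dvd_diff)
          then show False using j3 by (auto dest: zdvd_imp_le)
        qed
        then show ?thesis using a by (intro exI[of _ "y+3"]) simp
      qed
    qed
  qed
  then obtain L0 where L0: "\<not> j dvd (x - L0)" "\<not> m dvd (L0 - y)" by blast
  define K where "K = \<bar>N\<bar> + \<bar>L0\<bar>"
  have K0: "K \<ge> 0" by (simp add: K_def)
  have "j*m \<ge> 2*2" using assms by (intro mult_mono) auto
  then have "(j*m)*K \<ge> 1*K" using K0 by (intro mult_right_mono) auto
  then have "j*m*K \<ge> K" by simp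
  then have le: "L0 - j*m*K \<le> N" unfolding K_def by linarith
  have e1: "x - (L0 - j*m*K) = (x - L0) + j*m*K" by simp
  have e2: "(L0 - j*m*K) - y = (L0 - y) + j*m*(-K)" by simp
  have f1: "\<not> j dvd (x - (L0 - j*m*K))" unfolding e1 using shiftdvd(1)[of j "x - L0" m K] L0 by blast
  have f2: "\<not> m dvd ((L0 - j*m*K) - y)" unfolding e2 using shiftdvd(2)[of m "L0 - y" j "-K"] L0 by blast
  show ?thesis using le f1 f2 by blast
qed

lemma resid1:
  fixes D y N :: int
  assumes "D \<ge> 2"
  shows "\<exists>L \<le> N. \<not> D dvd (y - L)"
proof -
  define K where "K = \<bar>N\<bar> + \<bar>y\<bar>"
  have "D*K \<ge> 1*K" using assms by (intro mult_right_mono) (auto simp: K_def)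
  then have "D*K \<ge> K" by simp
  then have le: "y - 1 - D*K \<le> N" unfolding K_def by linarith
  have "\<not> D dvd (1 + D*K)"
  proof
    assume "D dvd (1 + D*K)"
    then have "D dvd 1" using dvd_add_left_iff[of D "D*K" 1] by simp
    then show False using assms by (auto dest: zdvd_imp_le)
  qed
  moreover have "y - (y - 1 - D*K) = 1 + D*K" by simp
  ultimately show ?thesis using le by (intro exI[of _ "y - 1 - D*K"]) simp
qed

locale dval =
  fixes v :: "'k::field \<Rightarrow> int"
  assumes dv: "discrete_valuation v"
begin

abbreviation I where "I n \<equiv> val_ideal v n"

lemma vmult: "x \<noteq> 0 \<Longrightarrow> y \<noteq> 0 \<Longrightarrow> v (x * y) = v x + v y"
  using dv unfolding discrete_valuation_def by blast

lemma vadd: "x \<noteq> 0 \<Longrightarrow> y \<noteq> 0 \<Longrightarrow> x + y \<noteq> 0 \<Longrightarrow> v (x + y) \<ge> min (v x) (v y)"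
  using dv unfolding discrete_valuation_def by blast

lemma vpi: "\<exists>p. p \<noteq> 0 \<and> v p = 1"
  using dv unfolding discrete_valuation_def by blast

lemma v1: "v 1 = 0"
  using vmult[of 1 1] by simp

lemma vm1: "v (-1) = 0"
  using vmult[of "-1" "-1"] v1 by simp

lemma vneg: "x \<noteq> 0 \<Longrightarrow> v (- x) = v x"
  using vmult[of "-1" x] vm1 by simp

lemma vinv: "x \<noteq> 0 \<Longrightarrow> v (inverse x) = - v x"
  using vmult[of x "inverse x"] v1 by simp

lemma vdiv: "x \<noteq> 0 \<Longrightarrow> y \<noteq> 0 \<Longrightarrow> v (x / y) = v x - v y"
  by (simp add: divide_inverse vmult vinv)

lemma vpow: "x \<noteq> 0 \<Longrightarrow> v (x ^ n) = int n * v x"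
  by (induction n) (simp_all add: v1 vmult algebra_simps)

lemma vexists: "\<exists>c. c \<noteq> 0 \<and> v c = L"
proof -
  obtain p where p: "p \<noteq> 0" "v p = 1" using vpi by blast
  show ?thesis
  proof (cases "L \<ge> 0")
    case True
    then show ?thesis using p by (intro exI[of _ "p ^ nat L"]) (simp add: vpow)
  next
    case False
    then show ?thesis using p
      by (intro exI[of _ "inverse p ^ nat (- L)"]) (simp add: vpow vinv)
  qed
qed

lemma I_iff: "x \<in> I n \<longleftrightarrow> x = 0 \<or> v x \<ge> n"
  by (simp add: val_ideal_def)

lemma I_zero[simp]: "0 \<in> I n" by (simp add: I_iff)

lemma I_add: "x \<in> I n \<Longrightarrow> y \<in> I n \<Longrightarrow> x + y \<in> I n"
proof -
  assume x: "x \<in> I n" and y: "y \<in> I n"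
  show ?thesis
  proof (cases "x = 0 \<or> y = 0 \<or> x + y = 0")
    case True then show ?thesis using x y by auto
  next
    case False
    then have "v (x + y) \<ge> min (v x) (v y)" using vadd by blast
    then show ?thesis using x y False unfolding I_iff by linarith
  qed
qed

lemma I_neg: "x \<in> I n \<Longrightarrow> - x \<in> I n"
proof -
  assume x: "x \<in> I n"
  show ?thesis
  proof (cases "x = 0")
    case False
    then have "v (- x) = v x" by (rule vneg)
    then show ?thesis using x unfolding I_iff by simp
  qed simp
qed

lemma I_diff: "x \<in> I n \<Longrightarrow> y \<in> I n \<Longrightarrow> x - y \<in> I n"
proof -
  assume "x \<in> I n" "y \<in> I n"
  then have "x + - y \<in> I n" using I_add I_neg by blast
  then show ?thesis by simp
qed

lemma I_mult: "x \<in> I n \<Longrightarrow> y \<in> I m \<Longrightarrow> x * y \<in> I (n + m)"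
proof -
  assume x: "x \<in> I n" and y: "y \<in> I m"
  show ?thesis
  proof (cases "x = 0 \<or> y = 0")
    case False
    then show ?thesis using x y vmult[of x y] unfolding I_iff by auto
  qed auto
qed

lemma I_mono: "x \<in> I m \<Longrightarrow> n \<le> m \<Longrightarrow> x \<in> I n"
  unfolding I_iff by auto

lemma I_sum: "finite S \<Longrightarrow> (\<And>i. i \<in> S \<Longrightarrow> f i \<in> I n) \<Longrightarrow> sum f S \<in> I n"
  by (induction S rule: finite_induct) (auto intro: I_add)

lemma add_small_nz: "a \<noteq> 0 \<Longrightarrow> r \<in> I (v a + 1) \<Longrightarrow> a + r \<noteq> 0"
proof
  assume "a \<noteq> 0" "r \<in> I (v a + 1)" "a + r = 0"
  then have "r = - a" by (simp add: eq_neg_iff_add_eq_0 add.commute)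
  then show False using \<open>a \<noteq> 0\<close> \<open>r \<in> I (v a + 1)\<close> by (auto simp: I_iff vneg)
qed

lemma core:
  fixes b :: "nat \<Rightarrow> 'k"
  assumes x: "x \<noteq> 0" and k: "k \<le> d" "b k \<noteq> 0"
    and dom: "\<And>i. i \<le> d \<Longrightarrow> i \<noteq> k \<Longrightarrow> b i \<noteq> 0 \<Longrightarrow>
                 v (b i) + int i * v x > v (b k) + int k * v x"
  shows "(\<Sum>i\<le>d. b i * x ^ i) \<noteq> 0"
proof -
  let ?a = "b k * x ^ k"
  have va: "v ?a = v (b k) + int k * v x" using x k by (simp add: vmult vpow)
  have a0: "?a \<noteq> 0" using x k by simp
  have "(\<Sum>i\<in>{..d}-{k}. b i * x ^ i) \<in> I (v ?a + 1)"
  proof (rule I_sum)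
    fix i assume i: "i \<in> {..d}-{k}"
    show "b i * x ^ i \<in> I (v ?a + 1)"
    proof (cases "b i = 0")
      case False
      then have "v (b i * x ^ i) = v (b i) + int i * v x" using x by (simp add: vmult vpow)
      then show ?thesis using dom[of i] i False va by (simp add: I_iff)
    qed simp
  qed simp
  moreover have "(\<Sum>i\<le>d. b i * x ^ i) = ?a + (\<Sum>i\<in>{..d}-{k}. b i * x ^ i)"
    using k by (simp add: sum.remove)
  ultimately show ?thesis using add_small_nz[OF a0] by simp
qed


lemma eval0: "(\<Sum>i\<le>d. b i * (0::'k) ^ i) = b 0"
  by (induction d) auto

end

lemma arithC:
  fixes p i q A B ai t :: int
  assumes "p < i" "i < q" "(q-p)*ai > (q-i)*A + (i-p)*B"
  shows "ai + i*t > min (A + p*t) (B + q*t)"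
proof -
  let ?m = "min (A + p*t) (B + q*t)"
  have eq: "(q-p)*(ai + i*t) - ((q-i)*(A + p*t) + (i-p)*(B + q*t)) = (q-p)*ai - ((q-i)*A + (i-p)*B)"
    by (simp add: algebra_simps)
  have m1: "(q-i)*(A + p*t) \<ge> (q-i)*?m" using assms by (intro mult_left_mono) auto
  have m2: "(i-p)*(B + q*t) \<ge> (i-p)*?m" using assms by (intro mult_left_mono) auto
  have m3: "(q-i)*?m + (i-p)*?m = (q-p)*?m" by (simp add: algebra_simps)
  have "(q-p)*(ai + i*t) > (q-p)*?m" using eq m1 m2 m3 assms(3) by linarith
  then show ?thesis using assms by (simp add: mult_less_cancel_left)
qed

lemma arithC':
  fixes p i q A B ai t :: int
  assumes "p < i" "i < q" "(q-p)*ai < (q-i)*A + (i-p)*B"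
  shows "ai + i*t < max (A + p*t) (B + q*t)"
proof -
  let ?m = "max (A + p*t) (B + q*t)"
  have eq: "(q-p)*(ai + i*t) - ((q-i)*(A + p*t) + (i-p)*(B + q*t)) = (q-p)*ai - ((q-i)*A + (i-p)*B)"
    by (simp add: algebra_simps)
  have m1: "(q-i)*(A + p*t) \<le> (q-i)*?m" using assms by (intro mult_left_mono) auto
  have m2: "(i-p)*(B + q*t) \<le> (i-p)*?m" using assms by (intro mult_left_mono) auto
  have m3: "(q-i)*?m + (i-p)*?m = (q-p)*?m" by (simp add: algebra_simps)
  have "(q-p)*(ai + i*t) < (q-p)*?m" using eq m1 m2 m3 assms(3) by linarith
  then show ?thesis using assms by (simp add: mult_less_cancel_left)
qed

context dval begin

lemma two_point:
  fixes b :: "nat \<Rightarrow> 'k"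
  assumes d: "d \<ge> 1" and b0: "b 0 \<noteq> 0" and bd: "b d \<noteq> 0"
    and mid: "\<And>i. 0 < i \<Longrightarrow> i < d \<Longrightarrow> b i \<noteq> 0 \<Longrightarrow>
       int d * v (b i) > (int d - int i) * v (b 0) + int i * v (b d)"
    and nd: "\<not> int d dvd (v (b d) - v (b 0))"
  shows "(\<Sum>i\<le>d. b i * x ^ i) \<noteq> 0"
proof (cases "x = 0")
  case True
  then show ?thesis using eval0[of b d] b0 by simp
next
  case False
  let ?t = "v x"
  have C: "v (b i) + int i * ?t > min (v (b 0) + int 0 * ?t) (v (b d) + int d * ?t)"
    if "0 < i" "i < d" "b i \<noteq> 0" for i
    using arithC[where p="int 0" and i="int i" and q="int d" and A="v (b 0)" and B="v (b d)" and ai="v (b i)" and t="v x"] mid[OF that] that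
    by simp
  have ne: "v (b 0) \<noteq> v (b d) + int d * ?t"
  proof
    assume "v (b 0) = v (b d) + int d * ?t"
    then have "v (b d) - v (b 0) = int d * (- ?t)" by simp
    then show False using nd by (metis dvd_triv_left)
  qed
  show ?thesis
  proof (cases "v (b 0) < v (b d) + int d * ?t")
    case True
    have dom: "v (b 0) + int 0 * v x < v (b i) + int i * v x"
      if i: "i \<le> d" "i \<noteq> 0" "b i \<noteq> 0" for i
    proof (cases "i = d")
      case True then show ?thesis using \<open>v (b 0) < _\<close> by simp
    next
      case False then show ?thesis using C[of i] i \<open>v (b 0) < _\<close> by simp
    qed
    show ?thesis using core[of x 0 d b, OF False _ b0 dom] by simp
  next
    case False2: False
    then have lt: "v (b d) + int d * ?t < v (b 0)" using ne by linarith
    have dom: "v (b d) + int d * v x < v (b i) + int i * v x"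
      if i: "i \<le> d" "i \<noteq> d" "b i \<noteq> 0" for i
    proof (cases "i = 0")
      case True then show ?thesis using lt by simp
    next
      case False then show ?thesis using C[of i] i lt by simp
    qed
    show ?thesis using core[of x d d b, OF False _ bd dom] by simp
  qed
qed


lemma three_point:
  fixes b :: "nat \<Rightarrow> 'k"
  assumes j: "0 < j" "j < d" and b0: "b 0 \<noteq> 0" and bd: "b d \<noteq> 0" and bj: "b j \<noteq> 0"
    and H1: "\<And>i. 0 < i \<Longrightarrow> i < j \<Longrightarrow> b i \<noteq> 0 \<Longrightarrow>
       int j * v (b i) > (int j - int i) * v (b 0) + int i * v (b j)"
    and H2: "\<And>i. j < i \<Longrightarrow> i < d \<Longrightarrow> b i \<noteq> 0 \<Longrightarrow>
       (int d - int j) * v (b i) > (int d - int i) * v (b j) + (int i - int j) * v (b d)"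
    and H3: "int d * v (b j) < (int d - int j) * v (b 0) + int j * v (b d)"
    and H4: "\<not> int j dvd (v (b 0) - v (b j))" "\<not> (int d - int j) dvd (v (b j) - v (b d))"
  shows "(\<Sum>i\<le>d. b i * x ^ i) \<noteq> 0"
proof (cases "x = 0")
  case True
  then show ?thesis using eval0[of b d] b0 by simp
next
  case False
  let ?t = "v x"
  let ?T0 = "v (b 0)" and ?Tj = "v (b j) + int j * ?t" and ?Td = "v (b d) + int d * ?t"
  have CL: "v (b i) + int i * ?t > min ?T0 ?Tj"
    if "0 < i" "i < j" "b i \<noteq> 0" for i
    using arithC[where p="int 0" and i="int i" and q="int j" and A="v (b 0)" and B="v (b j)" and ai="v (b i)" and t="v x"] H1[OF that] that
    by simp
  have CR: "v (b i) + int i * ?t > min ?Tj ?Td"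
    if "j < i" "i < d" "b i \<noteq> 0" for i
    using arithC[where p="int j" and i="int i" and q="int d" and A="v (b j)" and B="v (b d)" and ai="v (b i)" and t="v x"] H2[OF that] that
    by simp
  have CM: "?Tj < max ?T0 ?Td"
    using arithC'[where p="int 0" and i="int j" and q="int d" and A="v (b 0)" and B="v (b d)" and ai="v (b j)" and t="v x"] H3 j
    by simp
  have ne0: "?T0 \<noteq> ?Tj"
  proof
    assume "?T0 = ?Tj"
    then have "v (b 0) - v (b j) = int j * ?t" by simp
    then show False using H4(1) by (metis dvd_triv_left)
  qed
  have ned: "?Td \<noteq> ?Tj"
  proof
    assume "?Td = ?Tj"
    then have "v (b j) - v (b d) = (int d - int j) * ?t" by (simp add: algebra_simps)
    then show False using H4(2) by (metis dvd_triv_left)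
  qed
  consider "?Tj < ?T0 \<and> ?Tj < ?Td" | "?T0 < ?Tj" | "?Td < ?Tj" using ne0 ned by linarith
  then show ?thesis
  proof cases
    case 1
    have dom: "v (b j) + int j * v x < v (b i) + int i * v x"
      if i: "i \<le> d" "i \<noteq> j" "b i \<noteq> 0" for i
    proof -
      consider "i = 0" | "0 < i \<and> i < j" | "j < i \<and> i < d" | "i = d" using i by linarith
      then show ?thesis
      proof cases
        case 2 then show ?thesis using CL[of i] i 1 by simp
      next
        case 3 then show ?thesis using CR[of i] i 1 by simp
      qed (use 1 in auto)
    qed
    show ?thesis using core[of x j d b, OF False _ bj dom] j by simp
  next
    case 2
    then have "?T0 < ?Td" using CM by linarith
    have dom: "v (b 0) + int 0 * v x < v (b i) + int i * v x"
      if i: "i \<le> d" "i \<noteq> 0" "b i \<noteq> 0" for i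
    proof -
      consider "i = j" | "0 < i \<and> i < j" | "j < i \<and> i < d" | "i = d" using i by linarith
      then show ?thesis
      proof cases
        case 2 then show ?thesis using CL[of i] i \<open>?T0 < ?Tj\<close> by simp
      next
        case 3 then show ?thesis using CR[of i] i \<open>?T0 < ?Tj\<close> \<open>?T0 < ?Td\<close> by simp
      qed (use \<open>?T0 < ?Tj\<close> \<open>?T0 < ?Td\<close> in auto)
    qed
    show ?thesis using core[of x 0 d b, OF False _ b0 dom] by simp
  next
    case 3
    then have "?Td < ?T0" using CM by linarith
    have dom: "v (b d) + int d * v x < v (b i) + int i * v x"
      if i: "i \<le> d" "i \<noteq> d" "b i \<noteq> 0" for i
    proof -
      consider "i = j" | "0 < i \<and> i < j" | "j < i \<and> i < d" | "i = 0" using i by linarith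
      then show ?thesis
      proof cases
        case 2 then show ?thesis using CL[of i] i \<open>?Td < ?Tj\<close> \<open>?Td < ?T0\<close> by simp
      next
        case 3 then show ?thesis using CR[of i] i \<open>?Td < ?Tj\<close> by simp
      qed (use \<open>?Td < ?Tj\<close> \<open>?Td < ?T0\<close> in auto)
    qed
    show ?thesis using core[of x d d b, OF False _ bd dom] by simp
  qed
qed


lemma Vbound: fixes b :: "nat \<Rightarrow> 'k" shows "i \<le> d \<Longrightarrow> \<bar>v (b i)\<bar> \<le> (\<Sum>k\<le>d. \<bar>v (b k)\<bar>)"
  using member_le_sum[of i "{..d}" "\<lambda>k. \<bar>v (b k)\<bar>"] by simp

lemma nora_extreme0:
  fixes b :: "nat \<Rightarrow> 'k"
  assumes d: "d \<ge> 2" and bd: "b d \<noteq> 0"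
  shows "\<exists>c. c \<noteq> 0 \<and> (\<forall>x. (\<Sum>i\<le>d. (b(0:=c)) i * x ^ i) \<noteq> 0)"
proof -
  define V where "V = (\<Sum>k\<le>d. \<bar>v (b k)\<bar>)"
  obtain L where L: "L \<le> -2*int d*V - 1" "\<not> int d dvd (v (b d) - L)"
    using resid1[where D="int d" and y="v (b d)" and N="-2*int d*V - 1"] d by auto
  obtain c where c: "c \<noteq> 0" "v c = L" using vexists by blast
  have "(\<Sum>i\<le>d. (b(0:=c)) i * x ^ i) \<noteq> 0" for x
  proof (rule two_point)
    show "(b(0 := c)) 0 \<noteq> 0" "(b(0 := c)) d \<noteq> 0" using c bd d by auto
    show "\<not> int d dvd (v ((b(0 := c)) d) - v ((b(0 := c)) 0))" using L c d by auto
    fix i assume i: "0 < i" "i < d" "(b(0 := c)) i \<noteq> 0"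
    have "(int d - int i) * L + int i * v (b d) < int d * v (b i)"
      using ineq[of "int d - int i" "int i" "int d" "v (b i)" V "v (b d)" L] i L
        Vbound[of i d b] Vbound[of d d b] unfolding V_def by auto
    then show "(int d - int i) * v ((b(0 := c)) 0) + int i * v ((b(0 := c)) d) < int d * v ((b(0 := c)) i)"
      using i d c by auto
  qed (use d in auto)
  then show ?thesis using c by blast
qed

lemma nora_extremed:
  fixes b :: "nat \<Rightarrow> 'k"
  assumes d: "d \<ge> 2" and b0: "b 0 \<noteq> 0"
  shows "\<exists>c. c \<noteq> 0 \<and> (\<forall>x. (\<Sum>i\<le>d. (b(d:=c)) i * x ^ i) \<noteq> 0)"
proof -
  define V where "V = (\<Sum>k\<le>d. \<bar>v (b k)\<bar>)"
  obtain L where L: "L \<le> -2*int d*V - 1" "\<not> int d dvd (v (b 0) - L)"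
    using resid1[where D="int d" and y="v (b 0)" and N="-2*int d*V - 1"] d by auto
  obtain c where c: "c \<noteq> 0" "v c = L" using vexists by blast
  have "(\<Sum>i\<le>d. (b(d:=c)) i * x ^ i) \<noteq> 0" for x
  proof (rule two_point)
    show "(b(d := c)) 0 \<noteq> 0" "(b(d := c)) d \<noteq> 0" using c b0 d by auto
    have "\<not> int d dvd (L - v (b 0))"
      using L(2) by (metis dvd_minus_iff minus_diff_eq)
    then show "\<not> int d dvd (v ((b(d := c)) d) - v ((b(d := c)) 0))" using c d by auto
    fix i assume i: "0 < i" "i < d" "(b(d := c)) i \<noteq> 0"
    have "int i * L + (int d - int i) * v (b 0) < int d * v (b i)"
      using ineq[of "int i" "int d - int i" "int d" "v (b i)" V "v (b 0)" L] i L
        Vbound[of i d b] Vbound[of 0 d b] unfolding V_def by auto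
    then show "(int d - int i) * v ((b(d := c)) 0) + int i * v ((b(d := c)) d) < int d * v ((b(d := c)) i)"
      using i d c by auto
  qed (use d in auto)
  then show ?thesis using c by blast
qed

lemma nora_mid:
  fixes b :: "nat \<Rightarrow> 'k"
  assumes j: "2 \<le> j" "j + 2 \<le> d" and b0: "b 0 \<noteq> 0" and bd: "b d \<noteq> 0"
    and par: "\<not> (j = 2 \<and> d = 4 \<and> \<not> 2 dvd (v (b 0) - v (b d)))"
  shows "\<exists>c. c \<noteq> 0 \<and> (\<forall>x. (\<Sum>i\<le>d. (b(j:=c)) i * x ^ i) \<noteq> 0)"
proof -
  define V where "V = (\<Sum>k\<le>d. \<bar>v (b k)\<bar>)"
  have V0: "V \<ge> 0" unfolding V_def by (simp add: sum_nonneg)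
  have par': "\<not> (int j = 2 \<and> int d - int j = 2 \<and> \<not> 2 dvd (v (b 0) - v (b d)))"
    using par j by auto
  obtain L where L: "L \<le> -2*int d*V - 1" "\<not> int j dvd (v (b 0) - L)"
      "\<not> (int d - int j) dvd (L - v (b d))"
    using resid[where j="int j" and m="int d - int j" and x="v (b 0)" and y="v (b d)" and N="-2*int d*V - 1"] j par' by auto
  obtain c where c: "c \<noteq> 0" "v c = L" using vexists by blast
  have jV: "int j * V \<le> int d * V" "(int d - int j) * V \<le> int d * V"
    using j V0 by (auto intro: mult_right_mono)
  have Lj: "L \<le> -2*int j*V - 1" and Ldj: "L \<le> -2*(int d - int j)*V - 1"
  proof -
    have "2*int d*V = 2*(int d*V)" "2*int j*V = 2*(int j*V)"
      "2*(int d - int j)*V = 2*((int d - int j)*V)" by simp_all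
    then show "L \<le> -2*int j*V - 1" "L \<le> -2*(int d - int j)*V - 1" using L(1) jV by linarith+
  qed
  let ?b = "b(j:=c)"
  have "(\<Sum>i\<le>d. ?b i * x ^ i) \<noteq> 0" for x
  proof (rule three_point[where j=j])
    show "0 < j" "j < d" using j by auto
    show "?b 0 \<noteq> 0" "?b d \<noteq> 0" "?b j \<noteq> 0" using c b0 bd j by auto
    show "\<not> int j dvd (v (?b 0) - v (?b j))" using L c j by auto
    show "\<not> (int d - int j) dvd (v (?b j) - v (?b d))" using L c j by auto
    show "int d * v (?b j) < (int d - int j) * v (?b 0) + int j * v (?b d)"
      using ineqC[of "int d - int j" "int j" "int d" "v (b 0)" V "v (b d)" L] j L c
        Vbound[of 0 d b] Vbound[of d d b] unfolding V_def by auto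
  next
    fix i assume i: "0 < i" "i < j" "?b i \<noteq> 0"
    have "int i * L + (int j - int i) * v (b 0) < int j * v (b i)"
      using ineq[of "int i" "int j - int i" "int j" "v (b i)" V "v (b 0)" L] i Lj
        Vbound[of i d b] Vbound[of 0 d b] j unfolding V_def by auto
    then show "(int j - int i) * v (?b 0) + int i * v (?b j) < int j * v (?b i)"
      using i j c by auto
  next
    fix i assume i: "j < i" "i < d" "?b i \<noteq> 0"
    have "(int d - int i) * L + (int i - int j) * v (b d) < (int d - int j) * v (b i)"
      using ineq[of "int d - int i" "int i - int j" "int d - int j" "v (b i)" V "v (b d)" L] i Ldj
        Vbound[of i d b] Vbound[of d d b] j unfolding V_def by auto
    then show "(int d - int i) * v (?b j) + (int i - int j) * v (?b d) < (int d - int j) * v (?b i)"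
      using i j c by auto
  qed
  then show ?thesis using c by blast
qed

lemma nora_d4odd:
  fixes b :: "nat \<Rightarrow> 'k"
  assumes b0: "b 0 \<noteq> 0" and b4: "b 4 \<noteq> 0" and b1: "b 1 = 0" and b3: "b 3 = 0"
    and odd: "\<not> 2 dvd (v (b 0) - v (b 4))"
  shows "(\<Sum>i\<le>4. (b(2:=0)) i * x ^ i) \<noteq> 0"
proof (rule two_point)
  show "\<not> int 4 dvd (v ((b(2 := 0)) 4) - v ((b(2 := 0)) 0))"
  proof
    assume "int 4 dvd (v ((b(2 := 0)) 4) - v ((b(2 := 0)) 0))"
    then have "2 dvd (v (b 4) - v (b 0))" by (auto elim: dvd_trans[rotated] intro: dvd_trans[of 2 4] simp: dvd_def)
    then show False using odd by (metis dvd_minus_iff minus_diff_eq)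
  qed
  fix i :: nat assume "0 < i" "i < 4" "(b(2 := 0)) i \<noteq> 0"
  then show "(int 4 - int i) * v ((b(2 := 0)) 0) + int i * v ((b(2 := 0)) 4) < int 4 * v ((b(2 := 0)) i)"
    using b1 b3 by (auto simp: numeral_eq_Suc less_Suc_eq)
qed (use b0 b4 in auto)


lemma I0_1[simp]: "1 \<in> I 0" by (simp add: I_iff v1)

lemma I_mult0: "x \<in> I n \<Longrightarrow> y \<in> I 0 \<Longrightarrow> x * y \<in> I n"
  using I_mult[of x n y 0] by simp

lemma I_pow: "x \<in> I 0 \<Longrightarrow> x ^ k \<in> I 0"
  by (induction k) (auto intro: I_mult0)

lemma unit_inv: "y \<noteq> 0 \<Longrightarrow> v y = 0 \<Longrightarrow> inverse y \<in> I 0"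
  by (simp add: I_iff vinv)

lemma residue_pigeon:
  assumes frf: "finite_residue_field v" and u: "u \<in> I 0"
  shows "\<exists>g \<in> I 0. \<forall>y. y \<noteq> 0 \<and> v y = 0 \<longrightarrow> u * y^3 + g * y^2 + 1 \<notin> I 1"
proof -
  define P where "P F \<longleftrightarrow> finite F \<and> F \<subseteq> I 0 \<and> (\<forall>x \<in> I 0. \<exists>y\<in>F. x - y \<in> I 1)" for F
  have vr: "val_ring v = I 0" by (simp add: val_ring_def val_ideal_def)
  obtain F0 where "P F0" using frf unfolding finite_residue_field_def P_def vr by blast
  then obtain F where PF: "P F" and minF: "\<And>G. P G \<Longrightarrow> card F \<le> card G"
    using ex_has_least_nat[of P F0 card] by blast
  have finF: "finite F" and FI: "F \<subseteq> I 0" and rep: "\<And>x. x \<in> I 0 \<Longrightarrow> \<exists>y\<in>F. x - y \<in> I 1"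
    using PF unfolding P_def by auto
  have dist: "f1 = f2" if f: "f1 \<in> F" "f2 \<in> F" "f1 - f2 \<in> I 1" for f1 f2
  proof (rule ccontr)
    assume ne: "f1 \<noteq> f2"
    have "P (F - {f2})"
      unfolding P_def
    proof (intro conjI ballI)
      show "finite (F - {f2})" using finF by simp
      show "F - {f2} \<subseteq> I 0" using FI by auto
      fix x assume x: "x \<in> I 0"
      obtain y where y: "y \<in> F" "x - y \<in> I 1" using rep[OF x] by blast
      show "\<exists>y\<in>F - {f2}. x - y \<in> I 1"
      proof (cases "y = f2")
        case True
        have "x - f1 = (x - y) + (-(f1 - f2))" using True by simp
        then have "x - f1 \<in> I 1" using y f I_add I_neg by metis
        then show ?thesis using ne f by blast
      qed (use y in blast)
    qed
    then have "card F \<le> card (F - {f2})" by (rule minF)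
    moreover have "card (F - {f2}) < card F" using finF f(2) by (rule card_Diff1_less)
    ultimately show False by simp
  qed
  define U where "U = {f \<in> F. f \<notin> I 1}"
  have Uunit: "f \<noteq> 0 \<and> v f = 0" if "f \<in> U" for f
  proof -
    have "f \<in> I 0" "f \<notin> I 1" using that FI unfolding U_def by auto
    then show ?thesis unfolding I_iff by auto
  qed
  define q where "q f = - (u * f^3 + 1) * inverse (f^2)" for f
  have qI: "q f \<in> I 0" if "f \<in> U" for f
  proof -
    have "f \<in> I 0" using that FI U_def by auto
    moreover have "inverse (f^2) \<in> I 0" using Uunit[OF that] by (simp add: I_iff vinv vpow)
    ultimately show ?thesis unfolding q_def using u
      by (intro I_mult0 I_neg I_add) (auto intro: I_mult0 I_pow)
  qed
  define gg where "gg f = (SOME h. h \<in> F \<and> q f - h \<in> I 1)" for f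
  have gg: "gg f \<in> F \<and> q f - gg f \<in> I 1" if "f \<in> U" for f
  proof -
    have "\<exists>h. h \<in> F \<and> q f - h \<in> I 1" using rep[OF qI[OF that]] by blast
    then show ?thesis unfolding gg_def by (rule someI_ex)
  qed
  obtain z where z: "z \<in> F" "0 - z \<in> I 1" using rep[of 0] by auto
  have "z \<notin> U" using z I_neg[of "0 - z" 1] unfolding U_def by auto
  then have "U \<subset> F" using z unfolding U_def by auto
  then have "card U < card F" using finF by (simp add: psubset_card_mono)
  moreover have "card (gg ` U) \<le> card U" using finF \<open>U \<subset> F\<close> by (intro card_image_le) (auto intro: finite_subset)
  ultimately have "\<not> F \<subseteq> gg ` U" using finF by (metis card_mono finite_imageI finite_subset \<open>U \<subset> F\<close> psubset_imp_subset leD order_le_less_trans)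
  then obtain g where g: "g \<in> F" "g \<notin> gg ` U" by blast
  have gI: "g \<in> I 0" using g FI by auto
  show ?thesis
  proof (intro bexI[OF _ gI] allI impI notI)
    fix y assume y: "y \<noteq> 0 \<and> v y = 0" and w: "u * y^3 + g * y^2 + 1 \<in> I 1"
    have yI: "y \<in> I 0" using y by (simp add: I_iff)
    obtain f where f: "f \<in> F" "y - f \<in> I 1" using rep[OF yI] by blast
    have fI: "f \<in> I 0" using f FI by auto
    have fU: "f \<in> U"
    proof (rule ccontr)
      assume "f \<notin> U"
      then have "f \<in> I 1" using f U_def by auto
      then have "(y - f) + f \<in> I 1" using f I_add by blast
      then show False using y by (simp add: I_iff)
    qed
    have d3: "y^3 - f^3 = (y - f) * (y^2 + y*f + f^2)" by (simp add: algebra_simps power2_eq_square power3_eq_cube)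
    have d2: "y^2 - f^2 = (y - f) * (y + f)" by (simp add: algebra_simps power2_eq_square)
    have "y^2 + y*f + f^2 \<in> I 0" using yI fI by (intro I_add I_mult0 I_pow) auto
    then have e3: "y^3 - f^3 \<in> I 1" unfolding d3 using f(2) by (rule I_mult0[rotated])
    have "y + f \<in> I 0" using yI fI by (rule I_add)
    then have e2: "y^2 - f^2 \<in> I 1" unfolding d2 using f(2) by (rule I_mult0[rotated])
    have "(u * y^3 + g * y^2 + 1) - (u * (y^3 - f^3) + g * (y^2 - f^2)) \<in> I 1"
    proof -
      have "(y^3 - f^3) * u \<in> I 1" "(y^2 - f^2) * g \<in> I 1"
        using e3 e2 u gI by (auto intro: I_mult0)
      then have "u * (y^3 - f^3) + g * (y^2 - f^2) \<in> I 1" by (simp add: mult.commute I_add)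
      then show ?thesis using w by (rule I_diff[rotated])
    qed
    moreover have "(u * y^3 + g * y^2 + 1) - (u * (y^3 - f^3) + g * (y^2 - f^2)) = u * f^3 + g * f^2 + 1"
      by (simp add: algebra_simps)
    ultimately have wf: "u * f^3 + g * f^2 + 1 \<in> I 1" by simp
    have fu: "f \<noteq> 0" "v f = 0" using Uunit[OF fU] by auto
    have "(u * f^3 + g * f^2 + 1) * inverse (f^2) \<in> I 1"
      using wf fu by (intro I_mult0) (simp_all add: I_iff vinv vpow)
    moreover have "(u * f^3 + g * f^2 + 1) * inverse (f^2) = g - q f"
      using fu by (simp add: q_def field_simps power2_eq_square power3_eq_cube)
    ultimately have "g - q f \<in> I 1" by simp
    then have "(g - q f) + (q f - gg f) \<in> I 1" using gg[OF fU] I_add by blast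
    then have "g - gg f \<in> I 1" by simp
    then have "g = gg f" using dist[of g "gg f"] g gg[OF fU] by blast
    then show False using g fU by blast
  qed
qed


lemma sum3: fixes b :: "nat \<Rightarrow> 'k" shows "(\<Sum>i\<le>3. b i * x ^ i) = b 0 + b 1 * x + b 2 * x^2 + b 3 * x^3"
proof -
  have "{..3::nat} = {0,1,2,3}" by auto
  then show ?thesis by (simp add: add.assoc)
qed

lemma nora_d3:
  fixes b :: "nat \<Rightarrow> 'k"
  assumes frf: "finite_residue_field v"
    and b0: "b 0 \<noteq> 0" and b3: "b 3 \<noteq> 0" and b1: "b 1 = 0"
  shows "\<exists>c. \<forall>x. (\<Sum>i\<le>3. (b(2:=c)) i * x ^ i) \<noteq> 0"
proof (cases "int 3 dvd (v (b 3) - v (b 0))")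
  case False
  have "(\<Sum>i\<le>3. (b(2:=0)) i * x ^ i) \<noteq> 0" for x
  proof (rule two_point)
    fix i :: nat assume "0 < i" "i < 3" "(b(2 := 0)) i \<noteq> 0"
    then show "(int 3 - int i) * v ((b(2 := 0)) 0) + int i * v ((b(2 := 0)) 3) < int 3 * v ((b(2 := 0)) i)"
      using b1 by (auto simp: numeral_eq_Suc less_Suc_eq)
  qed (use b0 b3 False in auto)
  then show ?thesis by blast
next
  case True
  then obtain t where t: "v (b 0) - v (b 3) = 3 * t" by (metis dvd_def minus_diff_eq dvd_minus_iff of_nat_numeral)
  obtain s where s: "s \<noteq> 0" "v s = t" using vexists by blast
  define u where "u = b 3 * s^3 / b 0"
  have u0: "u \<noteq> 0" using b0 b3 s by (simp add: u_def)
  have vu: "v u = 0" using b0 b3 s t by (simp add: u_def vdiv vmult vpow)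
  obtain g where g: "g \<in> I 0" and gw: "\<And>y. y \<noteq> 0 \<Longrightarrow> v y = 0 \<Longrightarrow> u * y^3 + g * y^2 + 1 \<notin> I 1"
    using residue_pigeon[OF frf, of u] vu by (auto simp: I_iff)
  define c where "c = g * b 0 / s^2"
  let ?b = "b(2:=c)"
  have vc: "c \<noteq> 0 \<Longrightarrow> v c \<ge> v (b 0) - 2 * t"
  proof -
    assume c0: "c \<noteq> 0"
    then have g0: "g \<noteq> 0" by (simp add: c_def)
    then have "v g \<ge> 0" using g by (simp add: I_iff)
    then show ?thesis using g0 b0 s by (simp add: c_def vdiv vmult vpow)
  qed
  have "(\<Sum>i\<le>3. ?b i * x ^ i) \<noteq> 0" for x
  proof (cases "x = 0")
    case True then show ?thesis using eval0[of ?b 3] b0 by simp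
  next
    case x0: False
    consider "v x > t" | "v x < t" | "v x = t" by linarith
    then show ?thesis
    proof cases
      case 1
      have dom: "v (?b 0) + int 0 * v x < v (?b i) + int i * v x"
        if i: "i \<le> 3" "i \<noteq> 0" "?b i \<noteq> 0" for i
      proof -
        have "i = 1 \<or> i = 2 \<or> i = 3" using i by auto
        then show ?thesis
        proof (elim disjE)
          assume "i = 2" then show ?thesis using vc i 1 by auto
        next
          assume "i = 3" then show ?thesis using 1 t by auto
        qed (use i b1 in auto)
      qed
      show ?thesis using core[of x 0 3 ?b, OF x0 _ _ dom] b0 by simp
    next
      case 2
      have dom: "v (?b 3) + int 3 * v x < v (?b i) + int i * v x"
        if i: "i \<le> 3" "i \<noteq> 3" "?b i \<noteq> 0" for i
      proof -
        have "i = 0 \<or> i = 1 \<or> i = 2" using i by auto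
        then show ?thesis
        proof (elim disjE)
          assume "i = 2" then show ?thesis using vc i 2 t by auto
        next
          assume "i = 0" then show ?thesis using 2 t by auto
        qed (use i b1 in auto)
      qed
      show ?thesis using core[of x 3 3 ?b, OF x0 _ _ dom] b3 by simp
    next
      case 3
      define y where "y = x / s"
      have y: "y \<noteq> 0" "v y = 0" using x0 s 3 by (simp_all add: y_def vdiv)
      have xs: "x = s * y" using s by (simp add: y_def)
      have "(\<Sum>i\<le>3. ?b i * x ^ i) = b 0 + c * x^2 + b 3 * x^3"
        using b1 by (simp add: sum3)
      also have "\<dots> = b 0 * (u * y^3 + g * y^2 + 1)"
        using s b0 unfolding xs c_def u_def by (simp add: field_simps power2_eq_square power3_eq_cube)
      finally show ?thesis using gw[OF y] b0 by (auto simp: I_iff)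
    qed
  qed
  then show ?thesis by blast
qed


lemma infinite_K: "infinite (UNIV :: 'k set)"
proof -
  obtain p where p: "p \<noteq> 0" "v p = 1" using vpi by blast
  have "inj (\<lambda>n::nat. p ^ n)"
  proof (rule injI)
    fix m n :: nat assume "p ^ m = p ^ n"
    then have "v (p ^ m) = v (p ^ n)" by simp
    then show "m = n" using p by (simp add: vpow)
  qed
  then have "infinite (range (\<lambda>n::nat. p ^ n))" by (rule range_inj_infinite)
  then show ?thesis by (rule infinite_super[OF subset_UNIV])
qed

lemma exists_nonroot:
  fixes b :: "nat \<Rightarrow> 'k"
  assumes "k \<le> d" "b k \<noteq> 0"
  shows "\<exists>x. x \<noteq> 0 \<and> (\<Sum>i\<le>d. b i * x ^ i) \<noteq> 0"
proof -
  define p where "p = (\<Sum>i\<le>d. monom (b i) i)"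
  have "coeff p k = (\<Sum>i\<le>d. if k = i then b i else 0)"
    by (simp add: p_def coeff_sum coeff_monom)
  also have "\<dots> = b k" using assms by (simp add: sum.delta)
  finally have "p \<noteq> 0" using assms by auto
  then have fin: "finite {x. poly p x = 0}" by (rule poly_roots_finite)
  have fin2: "finite (insert 0 {x. poly p x = 0})" using fin by simp
  have "insert 0 {x. poly p x = 0} \<noteq> UNIV"
  proof
    assume "insert 0 {x. poly p x = 0} = UNIV"
    then show False using fin2 infinite_K by simp
  qed
  then obtain x where "x \<notin> insert 0 {x. poly p x = 0}" by blast
  moreover have "poly p x = (\<Sum>i\<le>d. b i * x ^ i)" by (simp add: p_def poly_sum poly_monom)
  ultimately show ?thesis by auto
qed

end

lemma sum_upd:
  fixes b :: "nat \<Rightarrow> 'a::comm_ring_1"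
  assumes "j \<le> d"
  shows "(\<Sum>i\<le>d. (b(j:=c)) i * x ^ i) = c * x ^ j + (\<Sum>i\<le>d. (b(j:=0)) i * x ^ i)"
proof -
  have "(\<Sum>i\<le>d. (b(j:=c)) i * x ^ i) = (\<Sum>i\<le>d. (b(j:=0)) i * x ^ i + (if i = j then c * x ^ j else 0))"
    by (rule sum.cong) auto
  also have "\<dots> = (\<Sum>i\<le>d. (b(j:=0)) i * x ^ i) + c * x ^ j"
    using assms by (simp add: sum.distrib)
  finally show ?thesis by simp
qed



definition openset :: "nat \<Rightarrow> 'k position \<Rightarrow> nat set" where
  "openset d a = {i. i \<le> d \<and> a i = None}"

definition nopen :: "nat \<Rightarrow> 'k position \<Rightarrow> nat" where
  "nopen d a = card (openset d a)"

definition wfp :: "nat \<Rightarrow> 'k::zero position \<Rightarrow> bool" where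
  "wfp d a \<longleftrightarrow> a 0 \<noteq> Some 0 \<and> a d \<noteq> Some 0"

lemma finite_openset[simp]: "finite (openset d a)"
  unfolding openset_def by (rule finite_subset[of _ "{..d}"]) auto

lemma complete_iff: "complete_pos d a \<longleftrightarrow> nopen d a = 0"
  unfolding complete_pos_def nopen_def openset_def by auto

lemma legal_open: "legal_move d a i c \<Longrightarrow> i \<in> openset d a"
  unfolding legal_move_def openset_def by auto

lemma openset_upd: "i \<in> openset d a \<Longrightarrow> openset d (a(i := Some c)) = openset d a - {i}"
  unfolding openset_def by auto

lemma nopen_upd: "legal_move d a i c \<Longrightarrow> nopen d (a(i := Some c)) = nopen d a - 1"
proof -
  assume lm: "legal_move d a i c"
  then have i: "i \<in> openset d a" by (rule legal_open)
  then have "openset d (a(i := Some c)) = openset d a - {i}" by (rule openset_upd)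
  then show ?thesis using i unfolding nopen_def by (simp add: card_Diff_singleton)
qed

lemma wfp_upd: "wfp d a \<Longrightarrow> legal_move d a i c \<Longrightarrow> wfp d (a(i := Some c))"
  unfolding wfp_def legal_move_def by auto

lemma poly_final: fixes a :: "'k::field position" shows "poly (final_poly d a) x = (\<Sum>i\<le>d. the (a i) * x ^ i)"
  by (simp add: final_poly_def poly_sum poly_monom)

lemma single_iff:
  assumes "openset d a = {j}"
  shows "(i \<le> d \<and> a i = None) \<longleftrightarrow> i = j"
proof -
  have "i \<in> openset d a \<longleftrightarrow> i = j" using assms by simp
  then show ?thesis unfolding openset_def by simp
qed

lemma single_open:
  assumes "openset d a = {j}"
  shows "complete_pos d (a(j := Some c))"
    and "\<And>i. the ((a(j := Some c)) i) = ((\<lambda>i. the (a i))(j := c)) i"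
    and "\<And>i. i \<le> d \<Longrightarrow> i \<noteq> j \<Longrightarrow> a i = Some (the (a i))"
    and "j \<le> d" "a j = None"
proof -
  note si = single_iff[OF assms]
  show "j \<le> d" "a j = None" using si[of j] by simp_all
  show *: "\<And>i. i \<le> d \<Longrightarrow> i \<noteq> j \<Longrightarrow> a i = Some (the (a i))"
  proof -
    fix i assume "i \<le> d" "i \<noteq> j"
    then have "a i \<noteq> None" using si[of i] by simp
    then show "a i = Some (the (a i))" by simp
  qed
  show "complete_pos d (a(j := Some c))"
    unfolding complete_pos_def
  proof (intro allI impI)
    fix i assume "i \<le> d"
    then show "(a(j := Some c)) i \<noteq> None" using *[of i] by (cases "i = j") auto
  qed
  show "\<And>i. the ((a(j := Some c)) i) = ((\<lambda>i. the (a i))(j := c)) i" by simp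
qed

lemma final_eq:
  fixes a :: "'k::field position"
  assumes "openset d a = {j}"
  shows "poly (final_poly d (a(j := Some c))) x = (\<Sum>i\<le>d. ((\<lambda>i. the (a i))(j := c)) i * x ^ i)"
  unfolding poly_final using single_open(2)[OF assms] by simp

context dval begin

lemma wanda_final:
  fixes a :: "'k position"
  assumes d: "d \<ge> 1" and wf: "wfp d a" and op: "openset d a = {j}"
  shows "\<exists>c. legal_move d a j c \<and> (\<exists>x. poly (final_poly d (a(j := Some c))) x = 0)"
proof -
  define b where "b = (\<lambda>i. the (a i))"
  note so = single_open[OF op]
  have b0: "j \<noteq> 0 \<Longrightarrow> b 0 \<noteq> 0" using so(3)[of 0] wf unfolding wfp_def b_def by (metis le0)
  have bd: "j \<noteq> d \<Longrightarrow> b d \<noteq> 0" using so(3)[of d] wf unfolding wfp_def b_def by (metis le_refl)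
  have fe: "poly (final_poly d (a(j := Some c))) x = c * x ^ j + (\<Sum>i\<le>d. (b(j:=0)) i * x ^ i)" for c x :: 'k
    unfolding final_eq[OF op] b_def[symmetric] using so(4) by (rule sum_upd)
  consider "j = 0" | "j = d" | "0 < j \<and> j < d" using so(4) by linarith
  then show ?thesis
  proof cases
    case 1
    then have "(b(j:=0)) d \<noteq> 0" using bd d by auto
    then obtain x where x: "x \<noteq> 0" "(\<Sum>i\<le>d. (b(j:=0)) i * x ^ i) \<noteq> 0"
      using exists_nonroot[of d d "b(j:=0)"] by auto
    let ?c = "- (\<Sum>i\<le>d. (b(j:=0)) i * x ^ i)"
    have "legal_move d a j ?c" using x so unfolding legal_move_def by auto
    moreover have "poly (final_poly d (a(j := Some ?c))) x = 0" using fe 1 by simp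
    ultimately show ?thesis by blast
  next
    case 2
    then have "(b(j:=0)) 0 \<noteq> 0" using b0 d by auto
    then obtain x where x: "x \<noteq> 0" "(\<Sum>i\<le>d. (b(j:=0)) i * x ^ i) \<noteq> 0"
      using exists_nonroot[of 0 d "b(j:=0)"] by auto
    let ?c = "- (\<Sum>i\<le>d. (b(j:=0)) i * x ^ i) / x ^ j"
    have "legal_move d a j ?c" using x so unfolding legal_move_def by auto
    moreover have "poly (final_poly d (a(j := Some ?c))) x = 0" using fe x by simp
    ultimately show ?thesis by blast
  next
    case 3
    let ?c = "- (\<Sum>i\<le>d. (b(j:=0)) i * 1 ^ i)"
    have "legal_move d a j ?c" using 3 so unfolding legal_move_def by auto
    moreover have "poly (final_poly d (a(j := Some ?c))) 1 = 0" using fe by simp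
    ultimately show ?thesis by blast
  qed
qed

lemma wanda_game:
  fixes a :: "'k position"
  assumes d: "d \<ge> 1"
  shows "wfp d a \<Longrightarrow> nopen d a = n \<Longrightarrow> n \<ge> 1 \<Longrightarrow> (m = Wanda \<longleftrightarrow> odd n) \<Longrightarrow> wins d Wanda a m"
proof (induction n arbitrary: a m)
  case 0 then show ?case by simp
next
  case (Suc k)
  have nc: "\<not> complete_pos d a" using Suc.prems by (simp add: complete_iff)
  show ?case
  proof (cases "k = 0")
    case True
    then have "card (openset d a) = 1" using Suc.prems by (simp add: nopen_def)
    then obtain j where op: "openset d a = {j}" by (rule card_1_singletonE)
    obtain c where c: "legal_move d a j c" and r: "\<exists>x. poly (final_poly d (a(j := Some c))) x = 0"
      using wanda_final[OF d Suc.prems(1) op] by blast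
    have m: "m = Wanda" using Suc.prems True by simp
    have "wins d Wanda (a(j := Some c)) (other Wanda)"
      by (rule wins.finished) (use single_open(1)[OF op] r in \<open>auto simp: winner_def\<close>)
    then show ?thesis unfolding m by (rule wins.own_move[OF nc c])
  next
    case False
    show ?thesis
    proof (cases "m = Wanda")
      case True
      obtain i where i: "i \<in> openset d a" using Suc.prems False
        by (metis card.empty empty_iff nopen_def ex_in_conv Suc_neq_Zero)
      have lm: "legal_move d a i 1" using i unfolding legal_move_def openset_def by auto
      have n1: "nopen d (a(i := Some 1)) = k" using nopen_upd[OF lm] Suc.prems by simp
      have "wins d Wanda (a(i := Some 1)) Nora"
      proof (rule Suc.IH[OF wfp_upd[OF Suc.prems(1) lm] n1])
        show "1 \<le> k" using False by simp
        show "(Nora = Wanda) = odd k" using Suc.prems True by simp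
      qed
      then show ?thesis unfolding True using wins.own_move[OF nc lm] by simp
    next
      case mW: False
      have "wins d Wanda (a(i := Some c)) Wanda" if lm: "legal_move d a i c" for i c
      proof -
        have n1: "nopen d (a(i := Some c)) = k" using nopen_upd[OF lm] Suc.prems by simp
        show ?thesis
        proof (rule Suc.IH[OF wfp_upd[OF Suc.prems(1) lm] n1])
          show "1 \<le> k" using False by simp
          show "(Wanda = Wanda) = odd k" using Suc.prems mW by simp
        qed
      qed
      then show ?thesis using mW by (intro wins.opp_move[OF nc]) auto
    qed
  qed
qed

end

definition nz :: "'k::zero position \<Rightarrow> nat \<Rightarrow> bool" where
  "nz a i \<longleftrightarrow> a i \<noteq> None \<and> a i \<noteq> Some 0"

definition Dn :: "nat \<Rightarrow> 'k::zero position \<Rightarrow> nat" where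
  "Dn d a = (if d = 3 then (if a 1 = None then 1 else 0) + (if nz a 1 \<and> a 2 = None then 1 else 0)
     else if d = 4 then (if a 1 = None then 1 else 0) + (if a 3 = None then 1 else 0)
        + (if a 2 = None \<and> (nz a 1 \<or> nz a 3) then 1 else 0)
     else (if a 1 = None then 1 else 0) + (if a (d-1) = None \<and> d \<noteq> 2 then 1 else 0))"

lemma Dn_mono:
  assumes "legal_move d a i c"
  shows "Dn d (a(i := Some c)) \<le> Dn d a"
proof -
  have ai: "a i = None" using assms by (simp add: legal_move_def)
  show ?thesis
  proof (cases "d = 3")
    case True
    then show ?thesis using ai by (auto simp: Dn_def nz_def)
  next
    case F3: False
    show ?thesis
    proof (cases "d = 4")
      case True
      then show ?thesis using ai by (auto simp: Dn_def nz_def)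
    next
      case False
      then show ?thesis using ai F3 by (auto simp: Dn_def nz_def)
    qed
  qed
qed

lemma Dn_dec:
  fixes a :: "'k::zero position"
  assumes d: "d \<ge> 2" and pos: "Dn d a > 0"
  shows "\<exists>i. legal_move d a i 0 \<and> Dn d (a(i := Some 0)) < Dn d a"
proof (cases "d = 3")
  case d3: True
  show ?thesis
  proof (cases "a 1 = None")
    case True
    then show ?thesis using d3 by (intro exI[of _ 1]) (auto simp: Dn_def nz_def legal_move_def)
  next
    case False
    then have "nz a 1 \<and> a 2 = None" using pos d3 by (auto simp: Dn_def split: if_splits)
    then show ?thesis using d3 by (intro exI[of _ 2]) (auto simp: Dn_def nz_def legal_move_def)
  qed
next
  case F3: False
  show ?thesis
  proof (cases "d = 4")
    case d4: True
    show ?thesis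
    proof (cases "a 2 = None \<and> (nz a 1 \<or> nz a 3)")
      case True
      then show ?thesis using d4 by (intro exI[of _ 2]) (auto simp: Dn_def nz_def legal_move_def)
    next
      case F: False
      show ?thesis
      proof (cases "a 1 = None")
        case True
        then show ?thesis using d4 F by (intro exI[of _ 1]) (auto simp: Dn_def nz_def legal_move_def)
      next
        case False
        then have "a 3 = None" using pos d4 F by (auto simp: Dn_def split: if_splits)
        then show ?thesis using d4 F by (intro exI[of _ 3]) (auto simp: Dn_def nz_def legal_move_def)
      qed
    qed
  next
    case F4: False
    show ?thesis
    proof (cases "a 1 = None")
      case True
      then show ?thesis using F3 F4 d by (intro exI[of _ 1]) (auto simp: Dn_def nz_def legal_move_def)
    next
      case False
      then have "a (d-1) = None \<and> d \<noteq> 2" using pos F3 F4 by (auto simp: Dn_def split: if_splits)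
      then show ?thesis using F3 F4 d False by (intro exI[of _ "d-1"]) (auto simp: Dn_def nz_def legal_move_def)
    qed
  qed
qed


context dval begin

lemma nora_final:
  fixes a :: "'k position"
  assumes frf: "finite_residue_field v" and d: "d \<ge> 2" and wf: "wfp d a"
    and op: "openset d a = {j}" and D0: "Dn d a = 0"
  shows "\<exists>c. legal_move d a j c \<and> \<not> (\<exists>x. poly (final_poly d (a(j := Some c))) x = 0)"
proof -
  define b where "b = (\<lambda>i. the (a i))"
  note so = single_open[OF op]
  have ab: "i \<le> d \<Longrightarrow> i \<noteq> j \<Longrightarrow> a i = Some (b i)" for i using so(3) unfolding b_def by blast
  have b0: "j \<noteq> 0 \<Longrightarrow> b 0 \<noteq> 0" using ab[of 0] wf unfolding wfp_def by auto
  have bd: "j \<noteq> d \<Longrightarrow> b d \<noteq> 0" using ab[of d] wf unfolding wfp_def by auto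
  have fe: "poly (final_poly d (a(j := Some c))) x = (\<Sum>i\<le>d. (b(j:=c)) i * x ^ i)" for c x :: 'k
    unfolding final_eq[OF op] b_def by simp
  have aj: "a j = None" "j \<le> d" using so by auto
  have win: "\<exists>c. legal_move d a j c \<and> \<not> (\<exists>x. poly (final_poly d (a(j := Some c))) x = 0)"
    if "c \<noteq> 0 \<or> (0 < j \<and> j < d)" "\<forall>x. (\<Sum>i\<le>d. (b(j:=c)) i * x ^ i) \<noteq> 0" for c
    using that aj fe unfolding legal_move_def by auto
  consider "j = 0" | "j = d" | "0 < j \<and> j < d" using aj by linarith
  then show ?thesis
  proof cases
    case 1
    obtain c where "c \<noteq> 0" "\<forall>x. (\<Sum>i\<le>d. (b(0:=c)) i * x ^ i) \<noteq> 0"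
      using nora_extreme0[of d b] d bd 1 by auto
    then show ?thesis using win 1 by blast
  next
    case 2
    obtain c where "c \<noteq> 0" "\<forall>x. (\<Sum>i\<le>d. (b(d:=c)) i * x ^ i) \<noteq> 0"
      using nora_extremed[of d b] d b0 2 by auto
    then show ?thesis using win 2 by blast
  next
    case 3
    then have b0': "b 0 \<noteq> 0" and bd': "b d \<noteq> 0" using b0 bd by auto
    show ?thesis
    proof (cases "d = 3")
      case d3: True
      have "a 1 \<noteq> None" using D0 d3 by (auto simp: Dn_def split: if_splits)
      then have j1: "j \<noteq> 1" using aj by auto
      then have j2: "j = 2" using 3 d3 by auto
      then have "\<not> nz a 1" using D0 d3 aj by (auto simp: Dn_def split: if_splits)
      then have "a 1 = Some 0" using \<open>a 1 \<noteq> None\<close> by (auto simp: nz_def)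
      then have "b 1 = 0" using ab[of 1] j1 d3 by auto
      then obtain c where "\<forall>x. (\<Sum>i\<le>3. (b(2:=c)) i * x ^ i) \<noteq> 0"
        using nora_d3[OF frf, of b] b0' bd' d3 by auto
      then show ?thesis using win[of c] j2 d3 by auto
    next
      case F3: False
      show ?thesis
      proof (cases "d = 4")
        case d4: True
        have "a 1 \<noteq> None" "a 3 \<noteq> None" using D0 d4 by (auto simp: Dn_def split: if_splits)
        then have "j \<noteq> 1" "j \<noteq> 3" using aj by auto
        then have j2: "j = 2" using 3 d4 by linarith
        then have "\<not> nz a 1" "\<not> nz a 3" using D0 d4 aj by (auto simp: Dn_def split: if_splits)
        then have "a 1 = Some 0" "a 3 = Some 0" using \<open>a 1 \<noteq> None\<close> \<open>a 3 \<noteq> None\<close> by (auto simp: nz_def)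
        then have b1: "b 1 = 0" and b3: "b 3 = 0" using ab[of 1] ab[of 3] j2 d4 by auto
        show ?thesis
        proof (cases "2 dvd (v (b 0) - v (b 4))")
          case True
          obtain c where "c \<noteq> 0" "\<forall>x. (\<Sum>i\<le>d. (b(2:=c)) i * x ^ i) \<noteq> 0"
            using nora_mid[of 2 d b] b0' bd' True d4 by auto
          then show ?thesis using win[of c] j2 by auto
        next
          case False
          have "\<forall>x. (\<Sum>i\<le>4. (b(2:=0)) i * x ^ i) \<noteq> 0"
            using nora_d4odd[of b] b0' bd' b1 b3 False d4 by auto
          then show ?thesis using win[of 0] j2 d4 by auto
        qed
      next
        case F4: False
        have "a 1 \<noteq> None" using D0 F3 F4 by (auto simp: Dn_def split: if_splits)
        then have j1: "j \<noteq> 1" using aj by auto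
        have d2: "d \<noteq> 2" using 3 j1 by auto
        then have "a (d-1) \<noteq> None" using D0 F3 F4 by (auto simp: Dn_def split: if_splits)
        then have "j \<noteq> d - 1" using aj by auto
        then have jj: "2 \<le> j" "j + 2 \<le> d" using 3 j1 by auto
        obtain c where "c \<noteq> 0" "\<forall>x. (\<Sum>i\<le>d. (b(j:=c)) i * x ^ i) \<noteq> 0"
          using nora_mid[OF jj b0' bd'] F4 by auto
        then show ?thesis using win[of c] by auto
      qed
    qed
  qed
qed

lemma nora_game:
  fixes a :: "'k position"
  assumes frf: "finite_residue_field v" and d: "d \<ge> 2"
  shows "wfp d a \<Longrightarrow> nopen d a = n \<Longrightarrow> n \<ge> 1 \<Longrightarrow> (m = Nora \<longleftrightarrow> odd n) \<Longrightarrow>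
    Dn d a \<le> (n - 1) div 2 \<Longrightarrow> wins d Nora a m"
proof (induction n arbitrary: a m)
  case 0 then show ?case by simp
next
  case (Suc k)
  have nc: "\<not> complete_pos d a" using Suc.prems by (simp add: complete_iff)
  show ?case
  proof (cases "k = 0")
    case True
    then have "card (openset d a) = 1" using Suc.prems by (simp add: nopen_def)
    then obtain j where op: "openset d a = {j}" by (rule card_1_singletonE)
    have D0: "Dn d a = 0" using Suc.prems True by simp
    obtain c where c: "legal_move d a j c" and r: "\<not> (\<exists>x. poly (final_poly d (a(j := Some c))) x = 0)"
      using nora_final[OF frf d Suc.prems(1) op D0] by blast
    have m: "m = Nora" using Suc.prems True by simp
    have "wins d Nora (a(j := Some c)) (other Nora)"
      by (rule wins.finished) (use single_open(1)[OF op] r in \<open>auto simp: winner_def\<close>)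
    then show ?thesis unfolding m by (rule wins.own_move[OF nc c])
  next
    case False
    show ?thesis
    proof (cases "m = Nora")
      case True
      have ev: "even k" using Suc.prems True by simp
      have "\<exists>i c. legal_move d a i c \<and> Dn d (a(i := Some c)) \<le> (k - 1) div 2"
      proof (cases "Dn d a > 0")
        case True
        then obtain i where i: "legal_move d a i 0" "Dn d (a(i := Some 0)) < Dn d a"
          using Dn_dec[OF d] by blast
        have "Dn d (a(i := Some 0)) \<le> (k - 1) div 2" using i(2) Suc.prems(5) ev False by auto
        then show ?thesis using i by blast
      next
        case F: False
        obtain i where i: "i \<in> openset d a" using Suc.prems False
          by (metis card.empty empty_iff nopen_def ex_in_conv Suc_neq_Zero)
        have lm: "legal_move d a i 1" using i unfolding legal_move_def openset_def by auto
        have "Dn d (a(i := Some 1)) \<le> (k - 1) div 2" using Dn_mono[OF lm] F by auto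
        then show ?thesis using lm by blast
      qed
      then obtain i c where lm: "legal_move d a i c" and Di: "Dn d (a(i := Some c)) \<le> (k - 1) div 2"
        by blast
      have n1: "nopen d (a(i := Some c)) = k" using nopen_upd[OF lm] Suc.prems by simp
      have "wins d Nora (a(i := Some c)) Wanda"
      proof (rule Suc.IH[OF wfp_upd[OF Suc.prems(1) lm] n1])
        show "1 \<le> k" using False by simp
        show "(Wanda = Nora) = odd k" using ev by simp
        show "Dn d (a(i := Some c)) \<le> (k - 1) div 2" by (rule Di)
      qed
      then show ?thesis unfolding True using wins.own_move[OF nc lm] by simp
    next
      case mN: False
      have odk: "odd k" using Suc.prems mN by simp
      have "wins d Nora (a(i := Some c)) Nora" if lm: "legal_move d a i c" for i c
      proof -
        have n1: "nopen d (a(i := Some c)) = k" using nopen_upd[OF lm] Suc.prems by simp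
        show ?thesis
        proof (rule Suc.IH[OF wfp_upd[OF Suc.prems(1) lm] n1])
          show "1 \<le> k" using False by simp
          show "(Nora = Nora) = odd k" using odk by simp
          have "Dn d (a(i := Some c)) \<le> Dn d a" by (rule Dn_mono[OF lm])
          moreover have "Suc k - 1 = k" by simp
          moreover have "k div 2 = (k - 1) div 2" using odk by (metis odd_two_times_div_two_nat odd_pos Suc_diff_1 div_mult_self1_is_m zero_less_numeral add_diff_cancel_left' even_Suc_div_two)
          ultimately show "Dn d (a(i := Some c)) \<le> (k - 1) div 2" using Suc.prems(5) by simp
        qed
      qed
      then show ?thesis using mN by (intro wins.opp_move[OF nc]) auto
    qed
  qed
qed

end

theorem theorem3:
  fixes v :: "'k::field \<Rightarrow> int" and d :: nat and first :: player
  assumes "d > 1"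
    and "local_field_valuation v"
  shows "wins d (last_mover d first) ((\<lambda>_. None) :: 'k position) first"
proof -
  have dv: "discrete_valuation v" and frf: "finite_residue_field v"
    using assms(2) unfolding local_field_valuation_def by auto
  interpret dval v by (rule dval.intro[OF dv])
  let ?a = "(\<lambda>_. None) :: 'k position"
  have wf: "wfp d ?a" by (simp add: wfp_def)
  have "openset d ?a = {..d}" by (auto simp: openset_def)
  then have n: "nopen d ?a = Suc d" by (simp add: nopen_def)
  show ?thesis
  proof (cases "last_mover d first")
    case Nora
    have f: "(first = Nora) = odd (Suc d)"
      using Nora by (cases first) (auto simp: last_mover_def split: if_splits)
    have D: "Dn d ?a \<le> (Suc d - 1) div 2"
    proof -
      have "d = 2 \<or> d = 3 \<or> d = 4 \<or> d \<ge> 5" using assms(1) by linarith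
      then show ?thesis by (elim disjE) (auto simp: Dn_def nz_def)
    qed
    show ?thesis unfolding Nora
      using nora_game[OF frf _ wf n _ f D] assms(1) by simp
  next
    case Wanda
    have f: "(first = Wanda) = odd (Suc d)"
      using Wanda by (cases first) (auto simp: last_mover_def split: if_splits)
    show ?thesis unfolding Wanda
      using wanda_game[OF _ wf n _ f] assms(1) by simp
  qed
qed

end
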